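(* Let $\mathcal C$ be an $(n,k,r,t)$-SLRC and let $G$ be a minimal repair graph of $\mathcal C$ with source set $S(G)$. Then for every $E\subseteq[n]$ with $|E|\le t$, $$|\mathrm{Out}(E)|\ge|E\cap S(G)|.$$
   Context: For an $[n,k]$ linear code $\mathcal C$ over a finite field $\mathbb F$, a recovering set of $i\in[n]$ is a set $R\subseteq[n]\setminus\{i\}$ with nonzero $a_j\in\mathbb F$ such that $x_i=\sum_{j\in R}a_jx_j$ for all $x\in\mathcal C$; standing assumption: recovering sets have size $2\le|R|\le r<k$. $\mathcal C$ is an $(n,k,r,t)$-SLRC if every $E\subseteq[n]$ with $|E|\le t$ can be indexed $\{i_1,\dots,i_{|E|}\}$ so that each $i_\ell$ has a recovering set $R_\ell\subseteq([n]\setminus E)\cup\{i_1,\dots,i_{\ell-1}\}$. A repair graph of $\mathcal C$ is a directed acyclic graph on vertex set $[n]$ such that for every vertex $i$ with nonempty in-neighbourhood $\mathrm{In}(i)$, $\mathrm{In}(i)$ is a recovering set of $i$. A source is a vertex with no in-neighbours; $S(G)$ is the set of sources. A minimal repair graph is a repair graph whose number of sources is minimum among all repair graphs of $\mathcal C$. $\mathrm{Out}(v)$ is the set of out-neighbours of $v$, and for $E\subseteq[n]$, $\mathrm{Out}(E)=\bigcup_{v\in E}\mathrm{Out}(v)\setminus E$. *)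

theory Defs
  imports Complex_Main "HOL-Library.Function_Algebras"
begin

text \<open>Ambient space F^n: functions nat => F supported on the index set [n] = {1..n}.\<close>

definition fscale :: "'a::field \<Rightarrow> (nat \<Rightarrow> 'a) \<Rightarrow> (nat \<Rightarrow> 'a)" where
  "fscale c x = (\<lambda>i. c * x i)"

definition ambient :: "nat \<Rightarrow> (nat \<Rightarrow> 'a::zero) set" where
  "ambient n = {x. \<forall>i. i \<notin> {1..n} \<longrightarrow> x i = 0}"

definition linear_code :: "nat \<Rightarrow> nat \<Rightarrow> (nat \<Rightarrow> 'a::{field,finite}) set \<Rightarrow> bool" where
  "linear_code n k C \<longleftrightarrow> C \<subseteq> ambient n \<and> module.subspace fscale C \<and> vector_space.dim fscale C = k"

definition recovering_set ::
  "nat \<Rightarrow> nat \<Rightarrow> (nat \<Rightarrow> 'a::{field,finite}) set \<Rightarrow> nat \<Rightarrow> nat set \<Rightarrow> bool" where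
  "recovering_set n r C i R \<longleftrightarrow>
     R \<subseteq> {1..n} - {i} \<and> 2 \<le> card R \<and> card R \<le> r \<and>
     (\<exists>a. (\<forall>j\<in>R. a j \<noteq> 0) \<and> (\<forall>x\<in>C. x i = (\<Sum>j\<in>R. a j * x j)))"

definition SLRC :: "nat \<Rightarrow> nat \<Rightarrow> nat \<Rightarrow> nat \<Rightarrow> (nat \<Rightarrow> 'a::{field,finite}) set \<Rightarrow> bool" where
  "SLRC n k r t C \<longleftrightarrow> linear_code n k C \<and> r < k \<and>
     (\<forall>E. E \<subseteq> {1..n} \<and> card E \<le> t \<longrightarrow>
        (\<exists>es. distinct es \<and> set es = E \<and>
           (\<forall>l < length es. \<exists>R. recovering_set n r C (es ! l) R \<and>
                R \<subseteq> ({1..n} - E) \<union> set (take l es))))"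

text \<open>Digraphs on [n] are edge relations; (u,v) is an edge u -> v.\<close>
definition In_nb :: "(nat \<times> nat) set \<Rightarrow> nat \<Rightarrow> nat set" where
  "In_nb G v = {u. (u, v) \<in> G}"

definition Out_nb :: "(nat \<times> nat) set \<Rightarrow> nat \<Rightarrow> nat set" where
  "Out_nb G v = {w. (v, w) \<in> G}"

definition Out_set :: "(nat \<times> nat) set \<Rightarrow> nat set \<Rightarrow> nat set" where
  "Out_set G E = (\<Union>v\<in>E. Out_nb G v) - E"

definition repair_graph ::
  "nat \<Rightarrow> nat \<Rightarrow> (nat \<Rightarrow> 'a::{field,finite}) set \<Rightarrow> (nat \<times> nat) set \<Rightarrow> bool" where
  "repair_graph n r C G \<longleftrightarrow> G \<subseteq> {1..n} \<times> {1..n} \<and> acyclic G \<and>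
     (\<forall>i\<in>{1..n}. In_nb G i \<noteq> {} \<longrightarrow> recovering_set n r C i (In_nb G i))"

definition sources :: "nat \<Rightarrow> (nat \<times> nat) set \<Rightarrow> nat set" where
  "sources n G = {i\<in>{1..n}. In_nb G i = {}}"

definition minimal_repair_graph ::
  "nat \<Rightarrow> nat \<Rightarrow> (nat \<Rightarrow> 'a::{field,finite}) set \<Rightarrow> (nat \<times> nat) set \<Rightarrow> bool" where
  "minimal_repair_graph n r C G \<longleftrightarrow> repair_graph n r C G \<and>
     (\<forall>G'. repair_graph n r C G' \<longrightarrow> card (sources n G) \<le> card (sources n G'))"

end

theory Submission
  imports Defs
begin

theorem lemma5:
  fixes C :: "(nat \<Rightarrow> 'a::{field,finite}) set"
    and G :: "(nat \<times> nat) set"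
  assumes "SLRC n k r t C"
    and "minimal_repair_graph n r C G"
    and "E \<subseteq> {1..n}" and "card E \<le> t"
  shows "card (Out_set G E) \<ge> card (E \<inter> sources n G)"
proof (rule ccontr)
  assume lt: "\<not> ?thesis"
  from assms(1,3,4) obtain es where es: "distinct es" "set es = E"
    and ex: "\<forall>l < length es. \<exists>R. recovering_set n r C (es ! l) R \<and>
                R \<subseteq> ({1..n} - E) \<union> set (take l es)"
    unfolding SLRC_def by blast
  from ex obtain Rf where Rf: "\<And>l. l < length es \<Longrightarrow> recovering_set n r C (es ! l) (Rf l) \<and>
                Rf l \<subseteq> ({1..n} - E) \<union> set (take l es)"
    by metis
  have rg: "repair_graph n r C G" and mn: "\<And>G'. repair_graph n r C G' \<Longrightarrow> card (sources n G) \<le> card (sources n G')"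
    using assms(2) unfolding minimal_repair_graph_def by auto
  define Ob where "Ob = Out_set G E"
  define A where "A = {(u,v). (u,v) \<in> G \<and> v \<notin> E \<and> v \<notin> Ob}"
  define B where "B = {(u, es!l) | u l. l < length es \<and> u \<in> Rf l}"
  define G' where "G' = A \<union> B"
  have Gsub: "G \<subseteq> {1..n} \<times> {1..n}" and Gac: "acyclic G"
    and Grec: "\<And>i. i\<in>{1..n} \<Longrightarrow> In_nb G i \<noteq> {} \<Longrightarrow> recovering_set n r C i (In_nb G i)"
    using rg unfolding repair_graph_def by auto
  have Aout: "u \<notin> E \<and> v \<notin> E" if "(u,v) \<in> A" for u v
    using that unfolding A_def Ob_def Out_set_def Out_nb_def by auto
  have BE: "v \<in> E" if "(u,v) \<in> B" for u v
    using that es unfolding B_def by auto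
  have rec_sub: "Rf l \<subseteq> {1..n}" if "l < length es" for l
    using Rf[OF that] unfolding recovering_set_def by auto
  define idx where "idx x = (THE j. j < length es \<and> es!j = x)" for x
  have idxn: "idx (es!j) = j" if "j < length es" for j
    unfolding idx_def
  proof (rule the_equality)
    fix j' assume "j' < length es \<and> es ! j' = es ! j"
    then show "j' = j" using that es(1) nth_eq_iff_index_eq by metis
  qed (use that in auto)
  have Bidx: "idx u < idx v" if "(u,v) \<in> B" "u \<in> E" for u v
  proof -
    from that(1) obtain l where l: "l < length es" "u \<in> Rf l" "v = es!l"
      unfolding B_def by auto
    then have "u \<in> set (take l es)" using Rf[OF l(1)] that(2) by auto
    then obtain j where j: "j < l" "es ! j = u"
      by (auto simp: in_set_conv_nth)
    then show ?thesis using l idxn[of j] idxn[of l] by auto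
  qed
  have P1: "y \<in> E \<and> idx x < idx y" if "(x,y) \<in> G'\<^sup>+" "x \<in> E" for x y
    using that(1)
  proof (induction rule: trancl_induct)
    case (base y)
    then have "(x,y) \<in> B" using that(2) Aout unfolding G'_def by blast
    then show ?case using that(2) BE Bidx by blast
  next
    case (step y z)
    then have "(y,z) \<in> B" using Aout unfolding G'_def by blast
    then show ?case using step BE Bidx by (meson less_trans)
  qed
  have P2: "(x,y) \<in> G\<^sup>+" if "(x,y) \<in> G'\<^sup>+" "y \<notin> E" for x y
    using that
  proof (induction rule: trancl_induct)
    case (base y)
    then have "(x,y) \<in> A" using BE unfolding G'_def by blast
    then show ?case unfolding A_def by blast
  next
    case (step y z)
    then have "(y,z) \<in> A" using BE unfolding G'_def by blast
    then have "y \<notin> E" "(y,z) \<in> G" using Aout unfolding A_def by blast+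
    then have "(x,y) \<in> G\<^sup>+" "(y,z) \<in> G" using step.IH by auto
    then show ?case by (rule trancl_into_trancl)
  qed
  have ac: "acyclic G'"
    unfolding acyclic_def
  proof
    fix x show "(x,x) \<notin> G'\<^sup>+"
    proof
      assume h: "(x,x) \<in> G'\<^sup>+"
      show False
      proof (cases "x \<in> E")
        case True then show False using P1[OF h] by simp
      next
        case False then show False using P2[OF h] Gac unfolding acyclic_def by blast
      qed
    qed
  qed
  have InE: "In_nb G' (es!l) = Rf l" if "l < length es" for l
  proof -
    have "(u, es!l) \<in> B \<longleftrightarrow> u \<in> Rf l" for u
    proof
      assume "(u, es!l) \<in> B"
      then obtain l' where "l' < length es" "u \<in> Rf l'" "es!l = es!l'" unfolding B_def by auto
      then show "u \<in> Rf l" using that es(1) nth_eq_iff_index_eq by metis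
    qed (use that in \<open>auto simp: B_def\<close>)
    moreover have "(u, es!l) \<notin> A" for u using Aout[of u "es!l"] that es by auto
    ultimately show ?thesis unfolding In_nb_def G'_def by auto
  qed
  have InO: "In_nb G' v = {}" if "v \<in> Ob" "v \<notin> E" for v
    using that BE unfolding In_nb_def G'_def A_def by auto
  have InR: "In_nb G' v = In_nb G v" if "v \<notin> Ob" "v \<notin> E" for v
    using that BE unfolding In_nb_def G'_def A_def by auto
  have vE: "\<exists>l<length es. v = es!l" if "v \<in> E" for v
    using that es by (auto simp: in_set_conv_nth)
  have G'rg: "repair_graph n r C G'"
    unfolding repair_graph_def
  proof (intro conjI ballI impI)
    show "G' \<subseteq> {1..n} \<times> {1..n}"
    proof
      fix p assume "p \<in> G'"
      then show "p \<in> {1..n} \<times> {1..n}"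
        unfolding G'_def A_def B_def using Gsub rec_sub es assms(3) by auto
    qed
    show "acyclic G'" by (rule ac)
  next
    fix i assume i: "i \<in> {1..n}" "In_nb G' i \<noteq> {}"
    show "recovering_set n r C i (In_nb G' i)"
    proof (cases "i \<in> E")
      case True
      then obtain l where "l < length es" "i = es!l" using vE by blast
      then show ?thesis using InE Rf by auto
    next
      case False
      then show ?thesis using i InO InR Grec by (cases "i \<in> Ob") auto
    qed
  qed
  have "Ob \<subseteq> {1..n}" unfolding Ob_def Out_set_def Out_nb_def
    using Gsub by blast
  then have fin: "finite Ob" using finite_subset by blast
  have Ssub: "sources n G' \<subseteq> (sources n G - E) \<union> Ob"
  proof
    fix v assume v: "v \<in> sources n G'"
    show "v \<in> (sources n G - E) \<union> Ob"
    proof (cases "v \<in> E")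
      case True
      then obtain l where l: "l < length es" "v = es!l" using vE by blast
      have "card (Rf l) \<ge> 2" using Rf[OF l(1)] unfolding recovering_set_def by auto
      then have "Rf l \<noteq> {}" by auto
      then show ?thesis using v InE[OF l(1)] l unfolding sources_def by auto
    next
      case False
      then show ?thesis using v InR unfolding sources_def by auto
    qed
  qed
  have finS: "finite (sources n G)" unfolding sources_def by auto
  have "card (sources n G') \<le> card ((sources n G - E) \<union> Ob)"
    using Ssub fin finS by (intro card_mono) auto
  also have "\<dots> \<le> card (sources n G - E) + card Ob" by (rule card_Un_le)
  also have "\<dots> < card (sources n G - E) + card (E \<inter> sources n G)"
    using lt Ob_def by simp
  also have "\<dots> = card (sources n G)"
  proof -
    have "card (sources n G) = card (sources n G \<inter> E) + card (sources n G - E)"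
      using finS by (rule card_Int_Diff)
    then show ?thesis by (simp add: Int_commute)
  qed
  finally show False using mn[OF G'rg] by simp
qed

end
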